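(* Let $f\colon X\to X$ be an expansive homeomorphism of a compact metric space $X$. Then $f$ admits a catenary local metric.
   Context: A homeomorphism $f$ of a compact metric space $(X,\operatorname{dist})$ is expansive if there is $\delta>0$ such that $\operatorname{dist}(f^n(x),f^n(y))\le\delta$ for all $n\in\mathbb{Z}$ implies $x=y$. Let $X^3_\delta=\{(x,y,z)\in X^3: y,z\in B_\delta(x)\}$, where $B_\delta(x)$ is the open ball of radius $\delta$ about $x$. A local metric on $X$ is a continuous function $D\colon X^3_\delta\to\mathbb{R}$ (for some $\delta>0$), written $D(x,y,z)=D_x(y,z)$, such that: (1) each $D_x$ is a metric on $B_\delta(x)$; (2) $D_x(x,y)=D_y(x,y)$ whenever $\operatorname{dist}(x,y)<\delta$. It is catenary if $\ddot D_x=D_x$ for all $x$, where $\ddot D_x(y,z)=D_{f(x)}(f(y),f(z))-2D_x(y,z)+D_{f^{-1}(x)}(f^{-1}(y),f^{-1}(z))$ whenever all these terms are defined. *)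

theory Defs
  imports "HOL-Analysis.Analysis"
begin

definition zpow :: "'a set \<Rightarrow> ('a \<Rightarrow> 'a) \<Rightarrow> int \<Rightarrow> 'a \<Rightarrow> 'a" where
  "zpow X f n = (if 0 \<le> n then f ^^ nat n else (inv_into X f) ^^ nat (- n))"

definition expansive_homeo :: "'a::metric_space set \<Rightarrow> ('a \<Rightarrow> 'a) \<Rightarrow> bool" where
  "expansive_homeo X f \<longleftrightarrow> (\<exists>g. homeomorphism X X f g) \<and>
     (\<exists>\<delta>>0. \<forall>x\<in>X. \<forall>y\<in>X.
        (\<forall>n::int. dist (zpow X f n x) (zpow X f n y) \<le> \<delta>) \<longrightarrow> x = y)"

definition X3 :: "'a::metric_space set \<Rightarrow> real \<Rightarrow> ('a \<times> 'a \<times> 'a) set" where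
  "X3 X \<delta> = {(x, y, z). x \<in> X \<and> y \<in> X \<and> z \<in> X \<and> y \<in> ball x \<delta> \<and> z \<in> ball x \<delta>}"

definition local_metric :: "'a::metric_space set \<Rightarrow> real \<Rightarrow> ('a \<Rightarrow> 'a \<Rightarrow> 'a \<Rightarrow> real) \<Rightarrow> bool" where
  "local_metric X \<delta> D \<longleftrightarrow> \<delta> > 0 \<and>
     continuous_on (X3 X \<delta>) (\<lambda>(x, y, z). D x y z) \<and>
     (\<forall>x\<in>X. \<forall>y\<in>X \<inter> ball x \<delta>. \<forall>z\<in>X \<inter> ball x \<delta>.
        0 \<le> D x y z \<and> (D x y z = 0 \<longleftrightarrow> y = z) \<and> D x y z = D x z y) \<and>
     (\<forall>x\<in>X. \<forall>y\<in>X \<inter> ball x \<delta>. \<forall>z\<in>X \<inter> ball x \<delta>. \<forall>w\<in>X \<inter> ball x \<delta>.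
        D x y w \<le> D x y z + D x z w) \<and>
     (\<forall>x\<in>X. \<forall>y\<in>X. dist x y < \<delta> \<longrightarrow> D x x y = D y x y)"

definition catenary :: "'a::metric_space set \<Rightarrow> ('a \<Rightarrow> 'a) \<Rightarrow> real \<Rightarrow> ('a \<Rightarrow> 'a \<Rightarrow> 'a \<Rightarrow> real) \<Rightarrow> bool" where
  "catenary X f \<delta> D \<longleftrightarrow>
     (\<forall>x y z. (x, y, z) \<in> X3 X \<delta> \<and> (f x, f y, f z) \<in> X3 X \<delta> \<and>
        (inv_into X f x, inv_into X f y, inv_into X f z) \<in> X3 X \<delta> \<longrightarrow>
        D (f x) (f y) (f z) - 2 * D x y z
          + D (inv_into X f x) (inv_into X f y) (inv_into X f z) = D x y z)"

end

theory Submission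
  imports Defs
begin

definition uu :: "real \<Rightarrow> 'a::metric_space \<Rightarrow> 'a \<Rightarrow> real" where
  "uu d a b = max 0 (dist a b - d)"

definition hh :: "real \<Rightarrow> 'a::metric_space \<Rightarrow> 'a \<Rightarrow> 'a \<Rightarrow> real" where
  "hh d a b c = min (dist b c) (uu d a b + uu d a c)"

definition lam :: real where "lam = (3 - sqrt 5) / 2"

definition tm :: "real \<Rightarrow> ('a::metric_space \<Rightarrow> 'a) \<Rightarrow> nat \<Rightarrow> 'a \<Rightarrow> 'a \<Rightarrow> 'a \<Rightarrow> real" where
  "tm d p k x y z = lam ^ k * hh d ((p ^^ k) x) ((p ^^ k) y) ((p ^^ k) z)"

definition SS :: "real \<Rightarrow> ('a::metric_space \<Rightarrow> 'a) \<Rightarrow> 'a \<Rightarrow> 'a \<Rightarrow> 'a \<Rightarrow> real" where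
  "SS d p x y z = (\<Sum>k. tm d p k x y z)"

definition RR :: "real \<Rightarrow> ('a::metric_space \<Rightarrow> 'a) \<Rightarrow> 'a \<Rightarrow> 'a \<Rightarrow> 'a \<Rightarrow> real" where
  "RR d p x y z = (\<Sum>k. tm d p (Suc k) x y z)"

lemma lam_pos: "0 < lam"
proof -
  have "sqrt 5 < sqrt (3^2)" by (rule real_sqrt_less_mono) simp
  then have "sqrt 5 < 3" by simp
  then show ?thesis unfolding lam_def by simp
qed

lemma lam_lt1: "lam < 1"
proof -
  have "sqrt 1 < sqrt 5" by simp
  then show ?thesis unfolding lam_def by simp
qed

lemma lam_sq: "lam * lam = 3 * lam - 1"
proof -
  have s: "sqrt 5 * sqrt 5 = 5" by simp
  show ?thesis unfolding lam_def by (simp add: algebra_simps divide_simps s)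
qed

lemma uu_nonneg: "0 \<le> uu d a b" unfolding uu_def by simp

lemma hh_nonneg: "0 \<le> hh d a b c"
  unfolding hh_def using uu_nonneg[of d a b] uu_nonneg[of d a c] by simp

lemma hh_le: "hh d a b c \<le> dist b c" unfolding hh_def by simp

lemma hh_sym: "hh d a b c = hh d a c b" unfolding hh_def by (simp add: dist_commute add.commute)

lemma hh_zero: "hh d a b b = 0"
  unfolding hh_def using uu_nonneg[of d a b] by simp

lemma uu_lip: "uu d a b \<le> uu d a c + dist b c"
  unfolding uu_def max_def using dist_triangle[of a b c] dist_commute[of c b] by (auto split: if_splits)

lemma hh_tri: "hh d a b w \<le> hh d a b c + hh d a c w"
proof -
  have t: "dist b w \<le> dist b c + dist c w" by (rule dist_triangle)
  have l1: "uu d a b \<le> uu d a c + dist b c" by (rule uu_lip)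
  have l2: "uu d a w \<le> uu d a c + dist c w" using uu_lip[of d a w c] by (simp add: dist_commute)
  have n: "0 \<le> uu d a c" by (rule uu_nonneg)
  show ?thesis unfolding hh_def using t l1 l2 n by (simp add: min_def)
qed

lemma hh_swap: "hh d a a b = hh d b a b"
  unfolding hh_def uu_def by (simp add: dist_commute min_def max_def)

lemma hh_ball: "dist a b < d \<Longrightarrow> dist a c < d \<Longrightarrow> hh d a b c = 0"
  unfolding hh_def uu_def by (simp add: min_def max_def)

lemma hh_pos: "2 * d < dist b c \<Longrightarrow> 0 < d \<Longrightarrow> 0 < hh d a b c"
proof -
  assume a: "2 * d < dist b c" "0 < d"
  have "dist b c \<le> dist a b + dist a c" using dist_triangle[of b c a] by (simp add: dist_commute)
  then have "d < dist a b \<or> d < dist a c" using a by linarith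
  then have "0 < uu d a b + uu d a c" using uu_nonneg[of d a b] uu_nonneg[of d a c]
    unfolding uu_def by auto
  moreover have "0 < dist b c" using a by linarith
  ultimately show ?thesis using a unfolding hh_def by simp
qed

lemma hh_cont:
  assumes "continuous_on A a" "continuous_on A b" "continuous_on A c"
  shows "continuous_on A (\<lambda>t. hh d (a t) (b t) (c t))"
  unfolding hh_def uu_def by (intro continuous_intros assms)

lemma funpow_in: "p ` X \<subseteq> X \<Longrightarrow> x \<in> X \<Longrightarrow> (p ^^ k) x \<in> X"
  by (induction k) auto

lemma funpow_cont:
  assumes "p ` X \<subseteq> X" "continuous_on X p"
  shows "continuous_on X (p ^^ k)"
proof (induction k)
  case 0 then show ?case by (simp add: continuous_on_id)
next
  case (Suc k)
  have "(p ^^ k) ` X \<subseteq> X" using funpow_in[OF assms(1)] by auto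
  then have "continuous_on X (\<lambda>x. p ((p ^^ k) x))"
    by (rule continuous_on_compose2[OF assms(2) Suc.IH])
  then show ?case by (simp add: o_def)
qed

lemma tm_nonneg: "0 \<le> tm d p k x y z"
  unfolding tm_def by (rule mult_nonneg_nonneg) (use lam_pos hh_nonneg in auto)

lemma tm_bound:
  assumes "bounded X" "p ` X \<subseteq> X" "x \<in> X" "y \<in> X" "z \<in> X"
  shows "tm d p k x y z \<le> lam ^ k * diameter X"
proof -
  have "hh d ((p ^^ k) x) ((p ^^ k) y) ((p ^^ k) z) \<le> diameter X"
    using hh_le diameter_bounded_bound[OF assms(1) funpow_in[OF assms(2) assms(4)] funpow_in[OF assms(2) assms(5)]]
    by (meson order_trans)
  then show ?thesis unfolding tm_def using lam_pos by (simp add: mult_left_mono)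
qed

lemma geo_summable: "summable (\<lambda>k. lam ^ k * C)"
  by (intro summable_mult2 summable_geometric) (use lam_pos lam_lt1 in auto)

lemma tm_summable:
  assumes "bounded X" "p ` X \<subseteq> X" "x \<in> X" "y \<in> X" "z \<in> X"
  shows "summable (\<lambda>k. tm d p k x y z)"
proof (rule summable_comparison_test'[OF geo_summable[of "diameter X"]])
  fix n show "norm (tm d p n x y z) \<le> lam ^ n * diameter X"
  proof -
    have a: "tm d p n x y z \<le> lam ^ n * diameter X" by (rule tm_bound[OF assms])
    have b: "0 \<le> tm d p n x y z" by (rule tm_nonneg)
    from a b show ?thesis by simp
  qed
qed

lemma tm_Suc: "tm d p (Suc k) x y z = lam * tm d p k (p x) (p y) (p z)"
  unfolding tm_def by (simp add: funpow_swap1)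

lemma SS_split:
  assumes "bounded X" "p ` X \<subseteq> X" "x \<in> X" "y \<in> X" "z \<in> X"
  shows "SS d p x y z = hh d x y z + RR d p x y z"
  using suminf_split_head[OF tm_summable[OF assms, of d]] unfolding SS_def RR_def
  by (simp add: tm_def)

lemma RR_eq:
  assumes "bounded X" "p ` X \<subseteq> X" "x \<in> X" "y \<in> X" "z \<in> X"
  shows "RR d p x y z = lam * SS d p (p x) (p y) (p z)"
proof -
  have "p x \<in> X" "p y \<in> X" "p z \<in> X" using assms by auto
  then show ?thesis unfolding RR_def SS_def tm_Suc
    using suminf_mult[OF tm_summable[OF assms(1,2), of "p x" "p y" "p z" d], of lam] by simp
qed

lemma tm_cont:
  assumes "p ` X \<subseteq> X" "continuous_on X p"
  shows "continuous_on (X \<times> X \<times> X) (\<lambda>t. tm d p k (fst t) (fst (snd t)) (snd (snd t)))"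
proof -
  have c: "continuous_on X (p ^^ k)" by (rule funpow_cont[OF assms])
  have 1: "continuous_on (X \<times> X \<times> X) (\<lambda>t. (p ^^ k) (fst t))"
    by (rule continuous_on_compose2[OF c]) (auto intro!: continuous_on_fst continuous_on_snd continuous_on_id)
  have 2: "continuous_on (X \<times> X \<times> X) (\<lambda>t. (p ^^ k) (fst (snd t)))"
    by (rule continuous_on_compose2[OF c]) (auto intro!: continuous_on_fst continuous_on_snd continuous_on_id)
  have 3: "continuous_on (X \<times> X \<times> X) (\<lambda>t. (p ^^ k) (snd (snd t)))"
    by (rule continuous_on_compose2[OF c]) (auto intro!: continuous_on_fst continuous_on_snd continuous_on_id)
  show ?thesis unfolding tm_def
    by (intro continuous_intros hh_cont 1 2 3)
qed

lemma SS_cont: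
  assumes "bounded X" "p ` X \<subseteq> X" "continuous_on X p"
  shows "continuous_on (X \<times> X \<times> X) (\<lambda>t. SS d p (fst t) (fst (snd t)) (snd (snd t)))"
proof -
  have ul: "uniform_limit (X \<times> X \<times> X) (\<lambda>n t. \<Sum>i<n. tm d p i (fst t) (fst (snd t)) (snd (snd t)))
     (\<lambda>t. \<Sum>i. tm d p i (fst t) (fst (snd t)) (snd (snd t))) sequentially"
  proof (rule Weierstrass_m_test[where M="\<lambda>k. lam ^ k * diameter X"])
    fix n t assume "t \<in> X \<times> X \<times> X"
    then have a: "tm d p n (fst t) (fst (snd t)) (snd (snd t)) \<le> lam ^ n * diameter X"
      using tm_bound[OF assms(1,2)] by auto
    have b: "0 \<le> tm d p n (fst t) (fst (snd t)) (snd (snd t))" by (rule tm_nonneg)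
    from a b show "norm (tm d p n (fst t) (fst (snd t)) (snd (snd t))) \<le> lam ^ n * diameter X"
      by simp
  qed (rule geo_summable)
  have "continuous_on (X \<times> X \<times> X) (\<lambda>t. \<Sum>i. tm d p i (fst t) (fst (snd t)) (snd (snd t)))"
    by (rule uniform_limit_theorem[OF _ ul])
      (auto intro!: always_eventually continuous_on_sum tm_cont assms)
  then show ?thesis unfolding SS_def .
qed

lemma SS_nonneg:
  assumes "bounded X" "p ` X \<subseteq> X" "x \<in> X" "y \<in> X" "z \<in> X"
  shows "0 \<le> SS d p x y z"
  unfolding SS_def by (rule suminf_nonneg[OF tm_summable[OF assms]]) (rule tm_nonneg)

lemma RR_nonneg:
  assumes "bounded X" "p ` X \<subseteq> X" "x \<in> X" "y \<in> X" "z \<in> X"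
  shows "0 \<le> RR d p x y z"
proof -
  have "p x \<in> X" "p y \<in> X" "p z \<in> X" using assms by auto
  then have "0 \<le> SS d p (p x) (p y) (p z)" using SS_nonneg[OF assms(1,2)] by blast
  then show ?thesis unfolding RR_eq[OF assms] using lam_pos by simp
qed

lemma tm_tri: "tm d p k x y w \<le> tm d p k x y z + tm d p k x z w"
proof -
  have "0 \<le> lam ^ k" using lam_pos by simp
  then show ?thesis unfolding tm_def using hh_tri
    by (metis distrib_left mult_left_mono)
qed

lemma SS_tri:
  assumes "bounded X" "p ` X \<subseteq> X" "x \<in> X" "y \<in> X" "z \<in> X" "w \<in> X"
  shows "SS d p x y w \<le> SS d p x y z + SS d p x z w"
proof -
  have s1: "summable (\<lambda>k. tm d p k x y z)" "summable (\<lambda>k. tm d p k x z w)"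
    "summable (\<lambda>k. tm d p k x y w)" using tm_summable[OF assms(1,2)] assms by auto
  have "SS d p x y z + SS d p x z w = (\<Sum>k. tm d p k x y z + tm d p k x z w)"
    unfolding SS_def by (rule suminf_add[OF s1(1,2)])
  moreover have "SS d p x y w \<le> (\<Sum>k. tm d p k x y z + tm d p k x z w)"
    unfolding SS_def by (rule suminf_le[OF tm_tri s1(3) summable_add[OF s1(1,2)]])
  ultimately show ?thesis by simp
qed

lemma tm_summable_Suc:
  assumes "bounded X" "p ` X \<subseteq> X" "x \<in> X" "y \<in> X" "z \<in> X"
  shows "summable (\<lambda>k. tm d p (Suc k) x y z)"
  using summable_Suc_iff[of "\<lambda>k. tm d p k x y z"] tm_summable[OF assms] by simp

lemma RR_tri:
  assumes "bounded X" "p ` X \<subseteq> X" "x \<in> X" "y \<in> X" "z \<in> X" "w \<in> X"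
  shows "RR d p x y w \<le> RR d p x y z + RR d p x z w"
proof -
  have s1: "summable (\<lambda>k. tm d p (Suc k) x y z)" "summable (\<lambda>k. tm d p (Suc k) x z w)"
    "summable (\<lambda>k. tm d p (Suc k) x y w)" using tm_summable_Suc[OF assms(1,2)] assms
    by auto
  have "RR d p x y z + RR d p x z w = (\<Sum>k. tm d p (Suc k) x y z + tm d p (Suc k) x z w)"
    unfolding RR_def by (rule suminf_add[OF s1(1,2)])
  moreover have "RR d p x y w \<le> (\<Sum>k. tm d p (Suc k) x y z + tm d p (Suc k) x z w)"
    unfolding RR_def by (rule suminf_le[OF tm_tri s1(3) summable_add[OF s1(1,2)]])
  ultimately show ?thesis by simp
qed

lemma SS_zero: "SS d p x y y = 0" unfolding SS_def tm_def by (simp add: hh_zero)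
lemma RR_zero: "RR d p x y y = 0" unfolding RR_def tm_def by (simp add: hh_zero)
lemma SS_sym: "SS d p x y z = SS d p x z y" unfolding SS_def tm_def by (subst hh_sym) simp
lemma RR_sym: "RR d p x y z = RR d p x z y" unfolding RR_def tm_def by (subst hh_sym) simp
lemma SS_swap: "SS d p x x y = SS d p y x y" unfolding SS_def tm_def by (subst hh_swap) (rule refl)
lemma RR_swap: "RR d p x x y = RR d p y x y" unfolding RR_def tm_def by (subst hh_swap) (rule refl)

lemma alg: "0 < l \<Longrightarrow> l * l = 3 * l - 1 \<Longrightarrow>
   A / l + l * B - 2 * (A + B) + (h + l * A + (B / l - h)) = A + (B::real)"
proof -
  assume l: "0 < l" "l * l = 3 * l - 1"
  have inv: "1 / l = 3 - l" using l by (simp add: field_simps)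
  have "A / l = A * (3 - l)" "B / l = B * (3 - l)" using inv by (metis times_divide_eq_right mult_1_right)+
  then show ?thesis by (simp add: algebra_simps)
qed

theorem mainTheorem19:
  fixes X :: "'a::metric_space set" and f :: "'a \<Rightarrow> 'a"
  assumes "compact X" and "expansive_homeo X f"
  shows "\<exists>\<delta> D. local_metric X \<delta> D \<and> catenary X f \<delta> D"
proof -
  from assms(2) obtain g' e where hom: "homeomorphism X X f g'" and e: "e > 0"
    and exp: "\<forall>x\<in>X. \<forall>y\<in>X. (\<forall>n::int. dist (zpow X f n x) (zpow X f n y) \<le> e) \<longrightarrow> x = y"
    unfolding expansive_homeo_def by blast
  define g where "g = inv_into X f"
  have bX: "bounded X" using assms(1) compact_imp_bounded by blast
  have fX: "f ` X \<subseteq> X" and fc: "continuous_on X f"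
    and g'f: "\<And>x. x \<in> X \<Longrightarrow> g' (f x) = x" and fg': "\<And>y. y \<in> X \<Longrightarrow> f (g' y) = y"
    and g'X: "g' ` X = X" and g'c: "continuous_on X g'"
    using hom unfolding homeomorphism_def by auto
  have inj: "inj_on f X" by (metis g'f inj_on_inverseI)
  have geq: "g y = g' y" if "y \<in> X" for y
  proof -
    have "g' y \<in> X" using g'X that by blast
    then have "inv_into X f (f (g' y)) = g' y" using inj by simp
    then show ?thesis using fg'[OF that] unfolding g_def by simp
  qed
  have gX: "g ` X \<subseteq> X" using geq g'X by auto
  have gc: "continuous_on X g" using continuous_on_cong[of X X g g'] geq g'c by simp
  have g_f: "g (f x) = x" if "x \<in> X" for x using that inj unfolding g_def by simp
  have f_g: "f (g x) = x" if "x \<in> X" for x using that geq fg' by simp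
  define \<delta> where "\<delta> = e / 2"
  have dpos: "\<delta> > 0" using e unfolding \<delta>_def by simp
  define D where "D = (\<lambda>x y z. SS \<delta> f x y z + RR \<delta> g x y z)"
  note sp = SS_split[OF bX] RR_eq[OF bX]
  have cRR: "continuous_on (X \<times> X \<times> X) (\<lambda>t. RR \<delta> g (fst t) (fst (snd t)) (snd (snd t)))"
  proof -
    have c1: "continuous_on (X \<times> X \<times> X) (\<lambda>t. SS \<delta> g (fst t) (fst (snd t)) (snd (snd t))
        - hh \<delta> (fst t) (fst (snd t)) (snd (snd t)))"
      by (intro continuous_intros SS_cont[OF bX gX gc] hh_cont)
    show ?thesis
    proof (rule continuous_on_cong[THEN iffD1, OF refl _ c1])
      fix t assume "t \<in> X \<times> X \<times> X"
      then show "SS \<delta> g (fst t) (fst (snd t)) (snd (snd t)) - hh \<delta> (fst t) (fst (snd t)) (snd (snd t))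
          = RR \<delta> g (fst t) (fst (snd t)) (snd (snd t))"
        using SS_split[OF bX gX] by auto
    qed
  qed
  have cD: "continuous_on (X \<times> X \<times> X) (\<lambda>t. D (fst t) (fst (snd t)) (snd (snd t)))"
    unfolding D_def by (intro continuous_intros SS_cont[OF bX fX fc] cRR)
  have cD3: "continuous_on (X3 X \<delta>) (\<lambda>(x, y, z). D x y z)"
  proof -
    have "X3 X \<delta> \<subseteq> X \<times> X \<times> X" unfolding X3_def by auto
    then have "continuous_on (X3 X \<delta>) (\<lambda>t. D (fst t) (fst (snd t)) (snd (snd t)))"
      using cD continuous_on_subset by blast
    moreover have "(\<lambda>(x, y, z). D x y z) = (\<lambda>t. D (fst t) (fst (snd t)) (snd (snd t)))"
      by (auto simp: fun_eq_iff split: prod.splits)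
    ultimately show ?thesis by simp
  qed
  have Dpos: "0 < D x y z" if xyz: "x \<in> X" "y \<in> X" "z \<in> X" "y \<noteq> z" for x y z
  proof -
    from exp xyz obtain n :: int where n: "dist (zpow X f n y) (zpow X f n z) > e"
      by (meson not_le)
    have S0: "0 \<le> SS \<delta> f x y z" using SS_nonneg[OF bX fX xyz(1-3)] .
    have R0: "0 \<le> RR \<delta> g x y z" using RR_nonneg[OF bX gX xyz(1-3)] .
    show ?thesis
    proof (cases "0 \<le> n")
      case True
      define k where "k = nat n"
      have "dist ((f ^^ k) y) ((f ^^ k) z) > 2 * \<delta>" using n True unfolding zpow_def k_def \<delta>_def by simp
      then have "0 < hh \<delta> ((f ^^ k) x) ((f ^^ k) y) ((f ^^ k) z)" using hh_pos dpos by blast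
      then have "0 < tm \<delta> f k x y z" unfolding tm_def using lam_pos by simp
      then have "0 < SS \<delta> f x y z" unfolding SS_def
        by (rule suminf_pos2[OF tm_summable[OF bX fX xyz(1-3)] tm_nonneg])
      then show ?thesis unfolding D_def using R0 by simp
    next
      case False
      define m where "m = nat (- n) - 1"
      have mn: "nat (- n) = Suc m" using False unfolding m_def by simp
      have "dist ((g ^^ Suc m) y) ((g ^^ Suc m) z) > 2 * \<delta>"
        using n False mn unfolding zpow_def \<delta>_def g_def by simp
      then have "0 < hh \<delta> ((g ^^ Suc m) x) ((g ^^ Suc m) y) ((g ^^ Suc m) z)" using hh_pos dpos by blast
      then have "0 < tm \<delta> g (Suc m) x y z" unfolding tm_def using lam_pos by simp
      then have "0 < RR \<delta> g x y z" unfolding RR_def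
        by (rule suminf_pos2[OF tm_summable_Suc[OF bX gX xyz(1-3)] tm_nonneg])
      then show ?thesis unfolding D_def using S0 by simp
    qed
  qed
  have LM: "local_metric X \<delta> D"
    unfolding local_metric_def
  proof (intro conjI ballI allI impI)
    show "0 < \<delta>" by (rule dpos)
    show "continuous_on (X3 X \<delta>) (\<lambda>(x, y, z). D x y z)" by (rule cD3)
  next
    fix x y z assume a: "x \<in> X" "y \<in> X \<inter> ball x \<delta>" "z \<in> X \<inter> ball x \<delta>"
    show "0 \<le> D x y z" unfolding D_def using SS_nonneg[OF bX fX] RR_nonneg[OF bX gX] a by auto
    have p: "y \<noteq> z \<Longrightarrow> 0 < D x y z" using Dpos[of x y z] a by auto
    show "(D x y z = 0) = (y = z)"
    proof
      assume "D x y z = 0" then show "y = z" using p by (cases "y = z") auto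
    next
      assume "y = z" then show "D x y z = 0" unfolding D_def by (simp add: SS_zero RR_zero)
    qed
    show "D x y z = D x z y" unfolding D_def using SS_sym RR_sym by metis
  next
    fix x y z w assume a: "x \<in> X" "y \<in> X \<inter> ball x \<delta>" "z \<in> X \<inter> ball x \<delta>" "w \<in> X \<inter> ball x \<delta>"
    show "D x y w \<le> D x y z + D x z w" unfolding D_def
      using SS_tri[OF bX fX, of x y z w \<delta>] RR_tri[OF bX gX, of x y z w \<delta>] a by auto
  next
    fix x y assume "x \<in> X" "y \<in> X" "dist x y < \<delta>"
    show "D x x y = D y x y" unfolding D_def using SS_swap RR_swap by metis
  qed
  have CT: "catenary X f \<delta> D"
    unfolding catenary_def
  proof (intro allI impI)
    fix x y z
    assume a: "(x, y, z) \<in> X3 X \<delta> \<and> (f x, f y, f z) \<in> X3 X \<delta> \<and>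
        (inv_into X f x, inv_into X f y, inv_into X f z) \<in> X3 X \<delta>"
    then have x: "x \<in> X" "y \<in> X" "z \<in> X" and b: "dist x y < \<delta>" "dist x z < \<delta>"
      unfolding X3_def by auto
    have h0: "hh \<delta> x y z = 0" using hh_ball[OF b] .
    have fx: "f x \<in> X" "f y \<in> X" "f z \<in> X" using fX x by auto
    have gx: "g x \<in> X" "g y \<in> X" "g z \<in> X" using gX x by auto
    define A where "A = SS \<delta> f x y z"
    define B where "B = RR \<delta> g x y z"
    have e1: "A = lam * SS \<delta> f (f x) (f y) (f z)"
      unfolding A_def using SS_split[OF bX fX x] RR_eq[OF bX fX x] h0 by simp
    have e1': "SS \<delta> f (f x) (f y) (f z) = A / lam" using e1 lam_pos by (simp add: field_simps)
    have e2: "RR \<delta> g (f x) (f y) (f z) = lam * B"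
      using RR_eq[OF bX gX fx] SS_split[OF bX gX x] h0 g_f x unfolding B_def by simp
    have e3: "SS \<delta> f (g x) (g y) (g z) = hh \<delta> (g x) (g y) (g z) + lam * A"
      using SS_split[OF bX fX gx] RR_eq[OF bX fX gx] f_g x unfolding A_def by simp
    have e4a: "SS \<delta> g (g x) (g y) (g z) = hh \<delta> (g x) (g y) (g z) + RR \<delta> g (g x) (g y) (g z)"
      using SS_split[OF bX gX gx] .
    have e4b: "B = lam * SS \<delta> g (g x) (g y) (g z)" unfolding B_def using RR_eq[OF bX gX x] .
    have e4: "RR \<delta> g (g x) (g y) (g z) = B / lam - hh \<delta> (g x) (g y) (g z)"
      using e4a e4b lam_pos by (simp add: field_simps)
    have "D (f x) (f y) (f z) - 2 * D x y z + D (g x) (g y) (g z) = D x y z"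
      unfolding D_def e1' e2 e3 e4 A_def[symmetric] B_def[symmetric]
      using alg[OF lam_pos lam_sq, of A B "hh \<delta> (g x) (g y) (g z)"] by simp
    then show "D (f x) (f y) (f z) - 2 * D x y z +
          D (inv_into X f x) (inv_into X f y) (inv_into X f z) = D x y z"
      unfolding g_def .
  qed
  show ?thesis using LM CT by blast
qed

end
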